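(* Let $\delta=x^{\mathbf d}f(\theta)$ be a homogeneous differential operator on $R$ of degree $\mathbf d\neq\mathbf 0$ with $-\mathbf d\in S$ but $-\mathbf d$ not in the interior of $\sigma^\vee$. If $\delta$ fixes at least one nonzero monomial ideal of $R$, then $\delta$ fixes infinitely many distinct nonzero monomial ideals of $R$.
   Context: Let $\sigma\subseteq\mathbb R^d$ be a full-dimensional, strongly convex rational polyhedral cone, $S=\sigma^\vee\cap\mathbb Z^d$, $R=\mathbb C[S]$ with monomial basis $x^{\mathbf a}$, $\mathbf a\in S$. Let $h_1,\dots,h_n$ be the primitive support functions of the facets of $\sigma^\vee$ (so $S=\{\mathbf a\in\mathbb Z^d: h_i(\mathbf a)\ge 0\ \forall i\}$). $(g,m)!=\prod_{j=0}^m(g-j)$ for $m\ge0$, $=1$ for $m<0$; $H_{\mathbf d}=\prod_i(h_i,h_i(-\mathbf d)-1)!$. For $f\in\mathbb C[t_1,\dots,t_d]$ divisible by $H_{\mathbf d}$, $\delta=x^{\mathbf d}f(\theta)$ is the $\mathbb C$-linear map $R\to R$ with $\delta(x^{\mathbf a})=f(\mathbf a)x^{\mathbf a+\mathbf d}$. An ideal $I$ is $\delta$-fixed if $\delta(I)=I$. *)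

theory Defs
  imports "HOL-Analysis.Analysis"
begin

(* Lattice Z^d is int^'d, ambient real space R^d is real^'d, complex points C^d is complex^'d *)

definition rvec :: "int^'d \<Rightarrow> real^'d" where
  "rvec a = (\<chi> j. real_of_int (a $ j))"

definition cvec :: "int^'d \<Rightarrow> complex^'d" where
  "cvec a = (\<chi> j. complex_of_int (a $ j))"

definition rat_poly_cone :: "(real^'d) set \<Rightarrow> bool" where
  "rat_poly_cone \<sigma> \<longleftrightarrow> (\<exists>V :: (int^'d) set. finite V \<and> \<sigma> = convex_cone hull (rvec ` V))"

definition dual_cone :: "(real^'d) set \<Rightarrow> (real^'d) set" where
  "dual_cone \<sigma> = {a. \<forall>u\<in>\<sigma>. 0 \<le> inner u a}"

(* S = sigma^vee \<inter> Z^d *)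
definition semigrp :: "(real^'d) set \<Rightarrow> (int^'d) set" where
  "semigrp \<sigma> = {a. rvec a \<in> dual_cone \<sigma>}"

definition hval :: "int^'d \<Rightarrow> int^'d \<Rightarrow> int" where
  "hval h a = (\<Sum>j\<in>UNIV. h $ j * a $ j)"

definition hlin :: "int^'d \<Rightarrow> complex^'d \<Rightarrow> complex" where
  "hlin h t = (\<Sum>j\<in>UNIV. complex_of_int (h $ j) * t $ j)"

definition primitive :: "int^'d \<Rightarrow> bool" where
  "primitive h \<longleftrightarrow> (\<forall>k::int. (\<forall>j. k dvd h $ j) \<longrightarrow> is_unit k)"

definition support_fns :: "(real^'d) set \<Rightarrow> (int^'d) set" where
  "support_fns \<sigma> = {h. primitive h \<and>
      (\<exists>F. F facet_of dual_cone \<sigma> \<and> (\<forall>a\<in>dual_cone \<sigma>. 0 \<le> inner (rvec h) a)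
           \<and> F = {a\<in>dual_cone \<sigma>. inner (rvec h) a = 0})}"

definition ffact :: "complex \<Rightarrow> int \<Rightarrow> complex" where
  "ffact g m = (if m < 0 then 1 else (\<Prod>j\<in>{0..nat m}. g - of_nat j))"

definition Hpoly :: "(real^'d) set \<Rightarrow> int^'d \<Rightarrow> complex^'d \<Rightarrow> complex" where
  "Hpoly \<sigma> d t = (\<Prod>h\<in>support_fns \<sigma>. ffact (hlin h t) (hval h (- d) - 1))"

(* polynomial functions C^d -> C, i.e. elements of C[t_1,...,t_d] (C is infinite) *)
definition poly_fun :: "(complex^'d \<Rightarrow> complex) \<Rightarrow> bool" where
  "poly_fun p \<longleftrightarrow> (\<exists>(K :: ('d \<Rightarrow> nat) set) c. finite K \<and>
       p = (\<lambda>t. \<Sum>k\<in>K. c k * (\<Prod>j\<in>UNIV. (t $ j) ^ (k j))))"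

(* R = C[S]: finitely supported coefficient functions with support in S *)
definition Rset :: "(real^'d) set \<Rightarrow> (int^'d \<Rightarrow> complex) set" where
  "Rset \<sigma> = {p. finite {a. p a \<noteq> 0} \<and> (\<forall>a. p a \<noteq> 0 \<longrightarrow> a \<in> semigrp \<sigma>)}"

definition monom :: "int^'d \<Rightarrow> (int^'d \<Rightarrow> complex)" where
  "monom a = (\<lambda>b. if b = a then 1 else 0)"

definition rmult :: "(int^'d \<Rightarrow> complex) \<Rightarrow> (int^'d \<Rightarrow> complex) \<Rightarrow> (int^'d \<Rightarrow> complex)" where
  "rmult p q = (\<lambda>c. \<Sum>a\<in>{a. p a \<noteq> 0}. p a * q (c - a))"

definition ideal_of :: "(real^'d) set \<Rightarrow> (int^'d \<Rightarrow> complex) set \<Rightarrow> bool" where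
  "ideal_of \<sigma> I \<longleftrightarrow> I \<subseteq> Rset \<sigma> \<and> (\<lambda>_. 0) \<in> I
     \<and> (\<forall>p\<in>I. \<forall>q\<in>I. (\<lambda>a. p a + q a) \<in> I)
     \<and> (\<forall>r\<in>Rset \<sigma>. \<forall>p\<in>I. rmult r p \<in> I)"

definition gen_ideal :: "(real^'d) set \<Rightarrow> (int^'d \<Rightarrow> complex) set \<Rightarrow> (int^'d \<Rightarrow> complex) set" where
  "gen_ideal \<sigma> G = \<Inter>{I. ideal_of \<sigma> I \<and> G \<subseteq> I}"

definition monomial_ideal :: "(real^'d) set \<Rightarrow> (int^'d \<Rightarrow> complex) set \<Rightarrow> bool" where
  "monomial_ideal \<sigma> I \<longleftrightarrow> (\<exists>A \<subseteq> semigrp \<sigma>. I = gen_ideal \<sigma> (monom ` A))"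

(* delta = x^d f(theta): the linear map with x^a |-> f(a) x^(a+d) *)
definition delta_op :: "int^'d \<Rightarrow> (complex^'d \<Rightarrow> complex) \<Rightarrow> (int^'d \<Rightarrow> complex) \<Rightarrow> (int^'d \<Rightarrow> complex)" where
  "delta_op d f p = (\<lambda>b. f (cvec (b - d)) * p (b - d))"

end

theory Submission
  imports Defs
begin


definition Mset :: "(real^'d) set \<Rightarrow> (int^'d) set \<Rightarrow> (int^'d \<Rightarrow> complex) set" where
  "Mset \<sigma> E = {p \<in> Rset \<sigma>. \<forall>b. p b \<noteq> 0 \<longrightarrow> b \<in> E}"

definition upc :: "(real^'d) set \<Rightarrow> (int^'d) set \<Rightarrow> (int^'d) set" where
  "upc \<sigma> A = {b. \<exists>a\<in>A. \<exists>s\<in>semigrp \<sigma>. b = a + s}"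

lemma rvec_add: "rvec (a + b) = rvec a + rvec b"
  by (simp add: rvec_def vec_eq_iff)
lemma rvec_diff: "rvec (a - b) = rvec a - rvec b"
  by (simp add: rvec_def vec_eq_iff)
lemma rvec_uminus: "rvec (- a) = - rvec a"
  by (simp add: rvec_def vec_eq_iff)
lemma rvec_0: "rvec 0 = 0"
  by (simp add: rvec_def vec_eq_iff)

lemma semigrp_0: "0 \<in> semigrp \<sigma>"
  by (simp add: semigrp_def dual_cone_def rvec_0)

lemma semigrp_add: "a \<in> semigrp \<sigma> \<Longrightarrow> b \<in> semigrp \<sigma> \<Longrightarrow> a + b \<in> semigrp \<sigma>"
  by (auto simp: semigrp_def dual_cone_def rvec_add inner_add_right add_nonneg_nonneg)

lemma upc_sub: "A \<subseteq> semigrp \<sigma> \<Longrightarrow> upc \<sigma> A \<subseteq> semigrp \<sigma>"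
  by (auto simp: upc_def intro: semigrp_add)

lemma upc_closed: "b \<in> upc \<sigma> A \<Longrightarrow> s \<in> semigrp \<sigma> \<Longrightarrow> b + s \<in> upc \<sigma> A"
proof -
  assume b: "b \<in> upc \<sigma> A" and s: "s \<in> semigrp \<sigma>"
  then obtain a t where "a \<in> A" "t \<in> semigrp \<sigma>" "b = a + t" by (auto simp: upc_def)
  then show ?thesis using s unfolding upc_def
    by (intro CollectI bexI[of _ a] bexI[of _ "t + s"]) (auto simp: add.assoc semigrp_add)
qed

lemma upc_base: "a \<in> A \<Longrightarrow> a \<in> upc \<sigma> A"
  unfolding upc_def by (intro CollectI bexI[of _ a] bexI[of _ 0]) (auto simp: semigrp_0)

lemma supp_rmult: "{c. rmult r p c \<noteq> 0} \<subseteq> (\<lambda>(a,b). a + b) ` ({a. r a \<noteq> 0} \<times> {b. p b \<noteq> 0})"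
proof
  fix c assume "c \<in> {c. rmult r p c \<noteq> 0}"
  then have "(\<Sum>a\<in>{a. r a \<noteq> 0}. r a * p (c - a)) \<noteq> 0" by (simp add: rmult_def)
  then obtain a where "r a \<noteq> 0" "r a * p (c - a) \<noteq> 0"
    by (metis (mono_tags, lifting) mem_Collect_eq sum.neutral)
  then show "c \<in> (\<lambda>(a,b). a + b) ` ({a. r a \<noteq> 0} \<times> {b. p b \<noteq> 0})"
    by (auto intro!: image_eqI[of _ _ "(a, c - a)"])
qed

lemma Mset_ideal:
  assumes E: "E \<subseteq> semigrp \<sigma>" and up: "\<And>b s. b \<in> E \<Longrightarrow> s \<in> semigrp \<sigma> \<Longrightarrow> b + s \<in> E"
  shows "ideal_of \<sigma> (Mset \<sigma> E)"
  unfolding ideal_of_def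
proof (intro conjI ballI)
  show "Mset \<sigma> E \<subseteq> Rset \<sigma>" by (auto simp: Mset_def)
  show "(\<lambda>_. 0) \<in> Mset \<sigma> E" by (simp add: Mset_def Rset_def)
next
  fix p q assume p: "p \<in> Mset \<sigma> E" and q: "q \<in> Mset \<sigma> E"
  have "{a. p a + q a \<noteq> 0} \<subseteq> {a. p a \<noteq> 0} \<union> {a. q a \<noteq> 0}" by auto
  moreover have "finite ({a. p a \<noteq> 0} \<union> {a. q a \<noteq> 0})"
    using p q by (simp add: Mset_def Rset_def)
  ultimately have "finite {a. p a + q a \<noteq> 0}" by (rule finite_subset)
  moreover have "\<And>a. p a + q a \<noteq> 0 \<Longrightarrow> a \<in> E"
  proof -
    fix a assume "p a + q a \<noteq> 0"
    then have "p a \<noteq> 0 \<or> q a \<noteq> 0" by auto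
    then show "a \<in> E" using p q by (auto simp: Mset_def)
  qed
  ultimately show "(\<lambda>a. p a + q a) \<in> Mset \<sigma> E"
    using E by (auto simp: Mset_def Rset_def)
next
  fix r p assume r: "r \<in> Rset \<sigma>" and p: "p \<in> Mset \<sigma> E"
  have fin: "finite {c. rmult r p c \<noteq> 0}"
    apply (rule finite_subset[OF supp_rmult])
    using r p by (auto simp: Mset_def Rset_def)
  have inE: "c \<in> E" if "rmult r p c \<noteq> 0" for c
  proof -
    from that have "(\<Sum>a\<in>{a. r a \<noteq> 0}. r a * p (c - a)) \<noteq> 0" by (simp add: rmult_def)
    then obtain a where "r a \<noteq> 0" "r a * p (c - a) \<noteq> 0"
      by (metis (mono_tags, lifting) mem_Collect_eq sum.neutral)
    then have "a \<in> semigrp \<sigma>" "c - a \<in> E" using r p by (auto simp: Mset_def Rset_def)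
    then have "(c - a) + a \<in> E" using up by blast
    then show ?thesis by simp
  qed
  show "rmult r p \<in> Mset \<sigma> E"
    using fin inE E by (auto simp: Mset_def Rset_def)
qed

lemma ideal_sum:
  assumes I: "ideal_of \<sigma> I" and F: "finite F" and h: "\<And>b. b \<in> F \<Longrightarrow> g b \<in> I"
  shows "(\<lambda>x. \<Sum>b\<in>F. g b x) \<in> I"
  using F h
proof (induction F rule: finite_induct)
  case empty then show ?case using I by (simp add: ideal_of_def)
next
  case (insert b F)
  have add: "\<And>p q. p \<in> I \<Longrightarrow> q \<in> I \<Longrightarrow> (\<lambda>a. p a + q a) \<in> I"
    using I unfolding ideal_of_def by blast
  have "(\<lambda>x. g b x + (\<Sum>b\<in>F. g b x)) \<in> I"
    by (rule add) (use insert in auto)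
  then show ?case using insert by simp
qed

lemma rmult_monom:
  "rmult (\<lambda>x. c * monom s x) (monom a) = (\<lambda>x. c * monom (a + s) x)"
proof (cases "c = 0")
  case True then show ?thesis by (simp add: rmult_def)
next
  case False
  then have S: "{x. c * monom s x \<noteq> 0} = {s}" by (auto simp: monom_def)
  show ?thesis
  proof
    fix x
    have "rmult (\<lambda>x. c * monom s x) (monom a) x = c * monom s s * monom a (x - s)"
      unfolding rmult_def S by simp
    also have "\<dots> = c * monom (a + s) x"
      by (auto simp: monom_def)
    finally show "rmult (\<lambda>x. c * monom s x) (monom a) x = c * monom (a + s) x" .
  qed
qed

lemma monom_Rset: "a \<in> semigrp \<sigma> \<Longrightarrow> (\<lambda>x. c * monom a x) \<in> Rset \<sigma>"
proof -
  assume a: "a \<in> semigrp \<sigma>"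
  have "{x. c * monom a x \<noteq> 0} \<subseteq> {a}" by (auto simp: monom_def)
  then have "finite {x. c * monom a x \<noteq> 0}" by (rule finite_subset) simp
  then show ?thesis using a by (auto simp: Rset_def monom_def split: if_splits)
qed

lemma Mset_sub_ideal:
  assumes I: "ideal_of \<sigma> I" and A: "monom ` A \<subseteq> I"
  shows "Mset \<sigma> (upc \<sigma> A) \<subseteq> I"
proof
  fix p assume p: "p \<in> Mset \<sigma> (upc \<sigma> A)"
  let ?F = "{b. p b \<noteq> 0}"
  have F: "finite ?F" using p by (simp add: Mset_def Rset_def)
  have "(\<lambda>x. \<Sum>b\<in>?F. p b * monom b x) \<in> I"
  proof (rule ideal_sum[OF I F])
    fix b assume "b \<in> ?F"
    then have "b \<in> upc \<sigma> A" using p by (auto simp: Mset_def)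
    then obtain a s where a: "a \<in> A" and s: "s \<in> semigrp \<sigma>" and b: "b = a + s"
      by (auto simp: upc_def)
    have "rmult (\<lambda>x. p b * monom s x) (monom a) \<in> I"
      using I A a monom_Rset[OF s] unfolding ideal_of_def by blast
    then show "(\<lambda>x. p b * monom b x) \<in> I" by (simp add: rmult_monom b)
  qed
  moreover have "(\<lambda>x. \<Sum>b\<in>?F. p b * monom b x) = p"
  proof
    fix x
    have "(\<Sum>b\<in>?F. p b * monom b x) = (\<Sum>b\<in>?F. if b = x then p b else 0)"
      by (rule sum.cong) (auto simp: monom_def)
    also have "\<dots> = p x" using F by (simp add: sum.delta)
    finally show "(\<Sum>b\<in>?F. p b * monom b x) = p x" .
  qed
  ultimately show "p \<in> I" by simp
qed

lemma gen_ideal_eq: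
  assumes A: "A \<subseteq> semigrp \<sigma>"
  shows "gen_ideal \<sigma> (monom ` A) = Mset \<sigma> (upc \<sigma> A)"
proof
  have id: "ideal_of \<sigma> (Mset \<sigma> (upc \<sigma> A))"
    by (rule Mset_ideal) (auto simp: upc_sub[OF A] upc_closed)
  have "monom ` A \<subseteq> Mset \<sigma> (upc \<sigma> A)"
  proof
    fix m assume "m \<in> monom ` A"
    then obtain a where a: "a \<in> A" "m = monom a" by auto
    have "(\<lambda>x. 1 * monom a x) \<in> Rset \<sigma>" using a A by (intro monom_Rset) auto
    then show "m \<in> Mset \<sigma> (upc \<sigma> A)"
      using a by (auto simp: Mset_def monom_def upc_base split: if_splits)
  qed
  then show "gen_ideal \<sigma> (monom ` A) \<subseteq> Mset \<sigma> (upc \<sigma> A)"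
    unfolding gen_ideal_def using id by blast
  show "Mset \<sigma> (upc \<sigma> A) \<subseteq> gen_ideal \<sigma> (monom ` A)"
    unfolding gen_ideal_def using Mset_sub_ideal by blast
qed



lemma dual_cone_0: "0 \<in> dual_cone \<sigma>"
  by (simp add: dual_cone_def)

lemma dual_cone_scale: "x \<in> dual_cone \<sigma> \<Longrightarrow> 0 \<le> c \<Longrightarrow> c *\<^sub>R x \<in> dual_cone \<sigma>"
  by (auto simp: dual_cone_def)

lemma convex_dual_cone: "convex (dual_cone \<sigma>)"
proof -
  have "dual_cone \<sigma> = (\<Inter>u\<in>\<sigma>. {x. inner u x \<ge> 0})"
    by (auto simp: dual_cone_def)
  then show ?thesis by (simp add: convex_INT convex_halfspace_ge)
qed

lemma in_dual_of_gens:
  assumes "\<sigma> = convex_cone hull T" and "\<forall>v\<in>T. 0 \<le> inner v x"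
  shows "x \<in> dual_cone \<sigma>"
proof -
  have cc: "convex_cone {w. 0 \<le> inner w x}"
    unfolding convex_cone_def conic_def
  proof (intro conjI allI impI)
    show "{w. 0 \<le> inner w x} \<noteq> {}" by (auto intro!: exI[of _ 0])
    have "{w. 0 \<le> inner w x} = {w. inner x w \<ge> 0}" by (auto simp: inner_commute)
    then show "convex {w. 0 \<le> inner w x}" by (simp add: convex_halfspace_ge)
  qed auto
  have "\<sigma> \<subseteq> {w. 0 \<le> inner w x}"
    unfolding assms(1) by (rule hull_minimal) (use assms(2) cc in auto)
  then show ?thesis by (auto simp: dual_cone_def)
qed

lemma cc_hull_sum:
  assumes "finite A" "\<And>x. x \<in> A \<Longrightarrow> f x \<in> convex_cone hull S"
  shows "sum f A \<in> convex_cone hull S"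
  using assms
proof (induction A rule: finite_induct)
  case empty then show ?case by (simp add: convex_cone_hull_contains_0)
next
  case (insert a A) then show ?case by (simp add: convex_cone_hull_add)
qed

lemma gordan:
  fixes T :: "(real^'d) set"
  assumes fin: "finite T" and sig: "\<sigma> = convex_cone hull T" and pt: "\<sigma> \<inter> uminus ` \<sigma> = {0}"
  shows "\<exists>a. \<forall>v\<in>T. v \<noteq> 0 \<longrightarrow> inner v a > 0"
proof -
  let ?T = "T - {0}"
  have finT: "finite ?T" using fin by simp
  let ?C = "convex hull ?T"
  have "0 \<notin> ?C"
  proof
    assume "0 \<in> ?C"
    then obtain u where u0: "\<forall>x\<in>?T. 0 \<le> u x" and u1: "sum u ?T = 1"
      and us: "(\<Sum>x\<in>?T. u x *\<^sub>R x) = 0"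
      unfolding convex_hull_finite[OF finT] by auto
    have "\<exists>v0\<in>?T. u v0 > 0"
    proof (rule ccontr)
      assume "\<not> (\<exists>v0\<in>?T. u v0 > 0)"
      then have "\<forall>x\<in>?T. u x = 0" using u0 by force
      then have "sum u ?T = 0" by simp
      then show False using u1 by simp
    qed
    then obtain v0 where v0: "v0 \<in> ?T" "u v0 > 0" by blast
    let ?w = "(\<Sum>x\<in>?T - {v0}. u x *\<^sub>R x)"
    have "(\<Sum>x\<in>?T. u x *\<^sub>R x) = u v0 *\<^sub>R v0 + ?w"
      using finT v0(1) by (simp add: sum.remove)
    then have eq: "u v0 *\<^sub>R v0 = - ?w" using us by (simp add: eq_neg_iff_add_eq_0)
    have w: "?w \<in> \<sigma>" unfolding sig
      by (rule cc_hull_sum) (use finT u0 in \<open>auto intro: convex_cone_hull_mul hull_inc\<close>)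
    have v: "u v0 *\<^sub>R v0 \<in> \<sigma>" unfolding sig
      using v0 by (auto intro: convex_cone_hull_mul hull_inc)
    have "u v0 *\<^sub>R v0 \<in> uminus ` \<sigma>" using eq w by auto
    then have "u v0 *\<^sub>R v0 = 0" using v pt by blast
    then show False using v0 by auto
  qed
  moreover have "convex ?C" by (simp add: convex_convex_hull)
  moreover have "closed ?C"
    by (rule compact_imp_closed[OF finite_imp_compact_convex_hull[OF finT]])
  ultimately obtain a b where "a \<noteq> 0" "0 < b" "\<forall>x\<in>?C. inner a x > b"
    using separating_hyperplane_closed_0 by blast
  then have "\<forall>v\<in>T. v \<noteq> 0 \<longrightarrow> inner v a > 0"
    by (metis Diff_iff hull_inc inner_commute order.strict_trans singletonD)
  then show ?thesis by blast
qed

lemma geom: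
  fixes \<sigma> :: "(real^'d) set" and x0 :: "real^'d"
  assumes rc: "rat_poly_cone \<sigma>" and pt: "\<sigma> \<inter> uminus ` \<sigma> = {0}"
    and x0: "x0 \<in> dual_cone \<sigma>" and nx0: "x0 \<notin> interior (dual_cone \<sigma>)"
  shows "\<exists>u. (\<forall>x\<in>dual_cone \<sigma>. 0 \<le> inner u x) \<and> inner u x0 = 0
            \<and> (\<exists>s\<in>semigrp \<sigma>. 0 < inner u (rvec s))"
proof -
  obtain V :: "(int^'d) set" where finV: "finite V" and sig: "\<sigma> = convex_cone hull (rvec ` V)"
    using rc by (auto simp: rat_poly_cone_def)
  let ?T = "rvec ` V"
  obtain a where a: "\<forall>v\<in>?T. v \<noteq> 0 \<longrightarrow> inner v a > 0"
    using gordan[OF _ sig pt] finV by blast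
  define U where "U = (\<Inter>v\<in>?T - {0}. {x. inner v x > 0})"
  have openU: "open U" unfolding U_def
    using finV by (intro open_INT) (auto intro: open_halfspace_gt)
  have aU: "a \<in> U" using a by (auto simp: U_def)
  have UD: "U \<subseteq> dual_cone \<sigma>"
  proof
    fix x assume "x \<in> U"
    then have "\<forall>v\<in>?T. 0 \<le> inner v x" unfolding U_def
      by (metis (no_types, lifting) DiffI INT_E inner_zero_left less_eq_real_def mem_Collect_eq order_refl singletonD)
    then show "x \<in> dual_cone \<sigma>" by (rule in_dual_of_gens[OF sig])
  qed
  have "a \<in> interior (dual_cone \<sigma>)" using interior_maximal[OF UD openU] aU by blast
  then have ri: "rel_interior (dual_cone \<sigma>) = interior (dual_cone \<sigma>)"
    using rel_interior_nonempty_interior by blast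
  have x0c: "x0 \<in> closure (dual_cone \<sigma>)" using x0 closure_subset by blast
  have x0r: "x0 \<notin> rel_interior (dual_cone \<sigma>)" using nx0 ri by simp
  obtain u where u0: "u \<noteq> 0" and usup: "\<And>y. y \<in> closure (dual_cone \<sigma>) \<Longrightarrow> inner u x0 \<le> inner u y"
    using supporting_hyperplane_relative_frontier[OF convex_dual_cone x0c x0r] by metis
  have D: "\<And>y. y \<in> dual_cone \<sigma> \<Longrightarrow> inner u x0 \<le> inner u y"
    using usup closure_subset by blast
  have "inner u x0 \<le> 0" using D[OF dual_cone_0] by simp
  moreover have "inner u x0 \<le> 2 * inner u x0"
    using D[OF dual_cone_scale[OF x0, of 2]] by simp
  ultimately have ux0: "inner u x0 = 0" by linarith
  have upos: "\<forall>x\<in>dual_cone \<sigma>. 0 \<le> inner u x" using D ux0 by simp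
  obtain r where r: "r > 0" "ball a r \<subseteq> U" using openU aU open_contains_ball by blast
  define p where "p = a + (r / (2 * norm u)) *\<^sub>R u"
  have nu: "norm u > 0" using u0 by simp
  have "dist a p = r / 2" using nu r by (simp add: p_def dist_norm)
  then have pU: "p \<in> U" using r by auto
  have "inner u p = inner u a + (r / (2 * norm u)) * (norm u)^2"
    by (simp add: p_def inner_add_right power2_norm_eq_inner)
  moreover have "inner u a \<ge> 0" using upos UD aU by blast
  moreover have "(r / (2 * norm u)) * (norm u)^2 > 0" using r nu by simp
  ultimately have up: "inner u p > 0" by linarith
  define W where "W = U \<inter> {x. inner u x > 0}"
  have openW: "open W" unfolding W_def by (intro open_Int openU open_halfspace_gt)
  have pW: "p \<in> W" using pU up by (simp add: W_def)
  have Wscale: "c *\<^sub>R x \<in> W" if "x \<in> W" "c > 0" for x c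
    using that by (auto simp: W_def U_def)
  obtain r' where r': "r' > 0" "ball p r' \<subseteq> W" using openW pW open_contains_ball by blast
  obtain N :: nat where N: "real CARD('d) / r' < real N" using reals_Archimedean2 by blast
  have Npos: "real N > 0"
    using N r' by (smt (verit) divide_pos_pos of_nat_0_less_iff zero_less_card_finite)
  define s :: "int^'d" where "s = (\<chi> j. \<lfloor>real N * p $ j\<rfloor>)"
  define q where "q = (1 / real N) *\<^sub>R rvec s"
  have comp: "\<bar>(p - q) $ j\<bar> \<le> 1 / real N" for j
  proof -
    have "(p - q) $ j = (real N * p $ j - of_int \<lfloor>real N * p $ j\<rfloor>) / real N"
      using Npos by (simp add: q_def s_def rvec_def field_simps)
    moreover have "0 \<le> real N * p $ j - of_int \<lfloor>real N * p $ j\<rfloor>"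
      "real N * p $ j - of_int \<lfloor>real N * p $ j\<rfloor> \<le> 1"
      by linarith+
    ultimately show ?thesis using Npos
      by (metis abs_of_nonneg divide_nonneg_pos divide_right_mono less_imp_le)
  qed
  have "norm (p - q) \<le> (\<Sum>j\<in>UNIV. \<bar>(p - q) $ j\<bar>)" by (rule norm_le_l1_cart)
  also have "\<dots> \<le> (\<Sum>j\<in>(UNIV::'d set). 1 / real N)" by (rule sum_mono) (rule comp)
  also have "\<dots> = real CARD('d) / real N" by simp
  also have "\<dots> < r'"
    using N Npos r' by (simp add: divide_less_eq mult.commute pos_divide_less_eq)
  finally have "q \<in> ball p r'" by (simp add: dist_norm)
  then have qW: "q \<in> W" using r' by blast
  have "rvec s = real N *\<^sub>R q" using Npos by (simp add: q_def)
  then have sW: "rvec s \<in> W" using Wscale[OF qW Npos] by simp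
  then have "s \<in> semigrp \<sigma>" using UD by (auto simp: W_def semigrp_def)
  moreover have "0 < inner u (rvec s)" using sW by (simp add: W_def)
  ultimately show ?thesis using upos ux0 by blast
qed



lemma delta_monom: "delta_op d f (monom a) = (\<lambda>b. f (cvec a) * monom (a + d) b)"
  by (auto simp: delta_op_def monom_def fun_eq_iff)

lemma monom_in_Mset: "b \<in> E \<Longrightarrow> E \<subseteq> semigrp \<sigma> \<Longrightarrow> monom b \<in> Mset \<sigma> E"
proof -
  assume b: "b \<in> E" and E: "E \<subseteq> semigrp \<sigma>"
  have "(\<lambda>x. 1 * monom b x) \<in> Rset \<sigma>" using b E by (intro monom_Rset) auto
  then show ?thesis using b by (auto simp: Mset_def monom_def split: if_splits)
qed

lemma Mset_zero: "(\<lambda>_. 0) \<in> Mset \<sigma> E"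
  by (simp add: Mset_def Rset_def)

theorem mainTheorem13:
  fixes \<sigma> :: "(real^'d) set" and d :: "int^'d" and f :: "complex^'d \<Rightarrow> complex"
  assumes "rat_poly_cone \<sigma>"
    and "interior \<sigma> \<noteq> {}"
    and "\<sigma> \<inter> uminus ` \<sigma> = {0}"
    and "poly_fun f"
    and "\<exists>g. poly_fun g \<and> f = (\<lambda>t. Hpoly \<sigma> d t * g t)"
    and "d \<noteq> 0"
    and "- d \<in> semigrp \<sigma>"
    and "rvec (- d) \<notin> interior (dual_cone \<sigma>)"
    and "\<exists>I. monomial_ideal \<sigma> I \<and> I \<noteq> {\<lambda>_. 0} \<and> delta_op d f ` I = I"
  shows "infinite {I. monomial_ideal \<sigma> I \<and> I \<noteq> {\<lambda>_. 0} \<and> delta_op d f ` I = I}"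
proof -
  let ?X = "{I. monomial_ideal \<sigma> I \<and> I \<noteq> {\<lambda>_. 0} \<and> delta_op d f ` I = I}"
  obtain I where mI: "monomial_ideal \<sigma> I" and nz: "I \<noteq> {\<lambda>_. 0}" and fix0: "delta_op d f ` I = I"
    using assms(9) by blast
  obtain A where A: "A \<subseteq> semigrp \<sigma>" and IA: "I = gen_ideal \<sigma> (monom ` A)"
    using mI by (auto simp: monomial_ideal_def)
  define E where "E = upc \<sigma> A"
  have IE: "I = Mset \<sigma> E" using IA gen_ideal_eq[OF A] by (simp add: E_def)
  have ES: "E \<subseteq> semigrp \<sigma>" unfolding E_def by (rule upc_sub[OF A])
  have Eup: "\<And>b s. b \<in> E \<Longrightarrow> s \<in> semigrp \<sigma> \<Longrightarrow> b + s \<in> E"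
    unfolding E_def by (rule upc_closed)
  have P1: "b - d \<in> E \<and> f (cvec (b - d)) \<noteq> 0" if b: "b \<in> E" for b
  proof -
    have "monom b \<in> delta_op d f ` I" using fix0 monom_in_Mset[OF b ES] IE by simp
    then obtain p where p: "p \<in> I" and eq: "monom b = delta_op d f p" by blast
    have "1 = f (cvec (b - d)) * p (b - d)"
      using fun_cong[OF eq, of b] by (simp add: monom_def delta_op_def)
    then have "f (cvec (b - d)) \<noteq> 0" "p (b - d) \<noteq> 0" by auto
    then show ?thesis using p IE by (auto simp: Mset_def)
  qed
  have P2: "a + d \<in> E" if a: "a \<in> E" and fa: "f (cvec a) \<noteq> 0" for a
  proof -
    have "delta_op d f (monom a) \<in> I" using fix0 monom_in_Mset[OF a ES] IE by blast
    moreover have "delta_op d f (monom a) (a + d) \<noteq> 0"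
      unfolding delta_monom using fa by (simp add: monom_def)
    ultimately show ?thesis using IE by (auto simp: Mset_def)
  qed
  obtain e where eE: "e \<in> E"
  proof -
    have "(\<lambda>_. 0) \<in> I" using IE Mset_zero by simp
    then obtain p where "p \<in> I" "p \<noteq> (\<lambda>_. 0)" using nz by blast
    then obtain b where "p b \<noteq> 0" "p \<in> Mset \<sigma> E" using IE by auto
    then have "b \<in> E" by (auto simp: Mset_def)
    then show ?thesis using that by blast
  qed
  have x0: "rvec (- d) \<in> dual_cone \<sigma>" using assms(7) by (simp add: semigrp_def)
  obtain u where upos: "\<forall>x\<in>dual_cone \<sigma>. 0 \<le> inner u x" and ud: "inner u (rvec (- d)) = 0"
    and s0: "\<exists>s\<in>semigrp \<sigma>. 0 < inner u (rvec s)"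
    using geom[OF assms(1) assms(3) x0 assms(8)] by blast
  obtain s0 where s0S: "s0 \<in> semigrp \<sigma>" and hs0: "0 < inner u (rvec s0)" using s0 by blast
  define h where "h a = inner u (rvec a)" for a
  have hadd: "h (a + b) = h a + h b" for a b by (simp add: h_def rvec_add inner_add_right)
  have hd: "h d = 0" using ud by (simp add: h_def rvec_uminus)
  have hsub: "h (b - d) = h b" for b by (simp add: h_def rvec_diff inner_diff_right hd[unfolded h_def])
  have hplus: "h (b + d) = h b" for b by (simp add: hadd hd)
  have hS: "h s \<ge> 0" if "s \<in> semigrp \<sigma>" for s using upos that by (simp add: h_def semigrp_def)
  define Ek where "Ek k = {a \<in> E. k \<le> h a}" for k
  have grow: "\<exists>b\<in>E. h e + real n * h s0 \<le> h b" for n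
  proof (induction n)
    case 0 then show ?case using eE by auto
  next
    case (Suc n)
    then obtain b where "b \<in> E" "h e + real n * h s0 \<le> h b" by blast
    then show ?case using Eup[OF _ s0S] hadd[of b s0]
      by (intro bexI[of _ "b + s0"]) (auto simp: algebra_simps)
  qed
  have Ek_ne: "\<exists>b. b \<in> Ek k" for k
  proof -
    obtain n :: nat where n: "(k - h e) / h s0 < real n" using reals_Archimedean2 by blast
    then have "k - h e < real n * h s0" using hs0[folded h_def] by (simp add: pos_divide_less_eq)
    then show ?thesis using grow[of n] by (force simp: Ek_def)
  qed
  have EkS: "Ek k \<subseteq> semigrp \<sigma>" for k using ES by (auto simp: Ek_def)
  have inX: "Mset \<sigma> (Ek k) \<in> ?X" for k
  proof -
    have "upc \<sigma> (Ek k) = Ek k"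
    proof
      show "upc \<sigma> (Ek k) \<subseteq> Ek k"
      proof
        fix b assume "b \<in> upc \<sigma> (Ek k)"
        then obtain a s where as: "a \<in> Ek k" "s \<in> semigrp \<sigma>" "b = a + s" by (auto simp: upc_def)
        have "0 \<le> h s" using hS as(2) by blast
        then show "b \<in> Ek k" using Eup as hadd[of a s] by (auto simp: Ek_def)
      qed
      show "Ek k \<subseteq> upc \<sigma> (Ek k)" using upc_base by blast
    qed
    then have mono: "monomial_ideal \<sigma> (Mset \<sigma> (Ek k))"
      unfolding monomial_ideal_def using gen_ideal_eq[OF EkS] EkS by metis
    obtain b where b: "b \<in> Ek k" using Ek_ne by blast
    have "monom b \<in> Mset \<sigma> (Ek k)" by (rule monom_in_Mset[OF b EkS])
    moreover have "monom b \<noteq> (\<lambda>_. 0)" by (auto simp: monom_def fun_eq_iff)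
    ultimately have nz': "Mset \<sigma> (Ek k) \<noteq> {\<lambda>_. 0}" by auto
    have "delta_op d f ` Mset \<sigma> (Ek k) = Mset \<sigma> (Ek k)"
    proof
      show "delta_op d f ` Mset \<sigma> (Ek k) \<subseteq> Mset \<sigma> (Ek k)"
      proof
        fix q assume "q \<in> delta_op d f ` Mset \<sigma> (Ek k)"
        then obtain p where p: "p \<in> Mset \<sigma> (Ek k)" and q: "q = delta_op d f p" by blast
        have supp: "{b. q b \<noteq> 0} \<subseteq> (\<lambda>a. a + d) ` {a. p a \<noteq> 0}"
        proof
          fix b assume "b \<in> {b. q b \<noteq> 0}"
          then have "p (b - d) \<noteq> 0" by (simp add: q delta_op_def)
          then show "b \<in> (\<lambda>a. a + d) ` {a. p a \<noteq> 0}" by (intro image_eqI[of _ _ "b - d"]) auto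
        qed
        have fin: "finite {b. q b \<noteq> 0}"
          using p by (intro finite_subset[OF supp]) (auto simp: Mset_def Rset_def)
        have inn: "b \<in> Ek k" if "q b \<noteq> 0" for b
        proof -
          from that have "f (cvec (b - d)) \<noteq> 0" "p (b - d) \<noteq> 0" by (auto simp: q delta_op_def)
          then have bd: "b - d \<in> Ek k" "f (cvec (b - d)) \<noteq> 0" using p by (auto simp: Mset_def)
          then have "b - d \<in> E" "k \<le> h (b - d)" by (auto simp: Ek_def)
          then have "(b - d) + d \<in> E" "k \<le> h (b - d)" using P2 bd(2) by blast+
          then show ?thesis by (simp add: Ek_def hsub)
        qed
        show "q \<in> Mset \<sigma> (Ek k)" using fin inn EkS by (auto simp: Mset_def Rset_def)
      qed
      show "Mset \<sigma> (Ek k) \<subseteq> delta_op d f ` Mset \<sigma> (Ek k)"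
      proof
        fix q assume q: "q \<in> Mset \<sigma> (Ek k)"
        define p where "p a = (if f (cvec a) \<noteq> 0 then q (a + d) / f (cvec a) else 0)" for a
        have supp: "{a. p a \<noteq> 0} \<subseteq> (\<lambda>b. b - d) ` {b. q b \<noteq> 0}"
        proof
          fix a assume "a \<in> {a. p a \<noteq> 0}"
          then have "q (a + d) \<noteq> 0" by (auto simp: p_def split: if_splits)
          then show "a \<in> (\<lambda>b. b - d) ` {b. q b \<noteq> 0}" by (intro image_eqI[of _ _ "a + d"]) auto
        qed
        have fin: "finite {a. p a \<noteq> 0}"
          using q by (intro finite_subset[OF supp]) (auto simp: Mset_def Rset_def)
        have inn: "a \<in> Ek k" if "p a \<noteq> 0" for a
        proof -
          from that have "q (a + d) \<noteq> 0" by (auto simp: p_def split: if_splits)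
          then have "a + d \<in> Ek k" using q by (auto simp: Mset_def)
          then have ad: "a + d \<in> E" "k \<le> h (a + d)" by (auto simp: Ek_def)
          then have "(a + d) - d \<in> E" "k \<le> h (a + d)" using P1[OF ad(1)] by blast+
          then show ?thesis by (simp add: Ek_def hplus)
        qed
        have pM: "p \<in> Mset \<sigma> (Ek k)" using fin inn EkS by (auto simp: Mset_def Rset_def)
        have "delta_op d f p = q"
        proof
          fix b
          show "delta_op d f p b = q b"
          proof (cases "f (cvec (b - d)) \<noteq> 0")
            case True then show ?thesis by (simp add: delta_op_def p_def)
          next
            case False
            have "q b = 0"
            proof (rule ccontr)
              assume "q b \<noteq> 0"
              then have "b \<in> E" using q by (auto simp: Mset_def Ek_def)
              then show False using P1 False by blast
            qed
            then show ?thesis using False by (simp add: delta_op_def p_def)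
          qed
        qed
        then show "q \<in> delta_op d f ` Mset \<sigma> (Ek k)" using pM by blast
      qed
    qed
    then show ?thesis using mono nz' by blast
  qed
  show ?thesis
  proof
    assume finX: "finite ?X"
    define val where "val J = (SOME r. \<exists>p\<in>J. \<exists>b. p b \<noteq> 0 \<and> r = h b)"
    for J :: "(int^'d \<Rightarrow> complex) set"
    have valP: "\<exists>p\<in>J. \<exists>b. p b \<noteq> 0 \<and> val J = h b" if "J \<in> ?X" for J
    proof -
      from that obtain A' where "J = gen_ideal \<sigma> (monom ` A')" "A' \<subseteq> semigrp \<sigma>"
        and nzJ: "J \<noteq> {\<lambda>_. 0}" by (auto simp: monomial_ideal_def)
      then have "(\<lambda>_. 0) \<in> J" using gen_ideal_eq Mset_zero by metis
      then obtain p where "p \<in> J" "p \<noteq> (\<lambda>_. 0)" using nzJ by blast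
      then obtain b where "p \<in> J" "p b \<noteq> 0" by auto
      then have "\<exists>r. \<exists>p\<in>J. \<exists>b. p b \<noteq> 0 \<and> r = h b" by blast
      then show ?thesis unfolding val_def by (rule someI_ex[where P = "\<lambda>r. \<exists>p\<in>J. \<exists>b. p b \<noteq> 0 \<and> r = h b", THEN bexE]) blast+
    qed
    define B where "B = Max (val ` ?X)"
    define J where "J = Mset \<sigma> (Ek (B + 1))"
    have JX: "J \<in> ?X" unfolding J_def by (rule inX)
    have "val J \<le> B" unfolding B_def using finX JX by (intro Max_ge) auto
    moreover obtain p b where "p \<in> J" "p b \<noteq> 0" "val J = h b" using valP[OF JX] by blast
    then have "val J \<ge> B + 1" by (auto simp: J_def Mset_def Ek_def)
    ultimately show False by linarith
  qed
qed

end
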